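(* In any quiver, every normal vertex of finite height is phylogenetic.
   Context: A quiver consists of a class of vertices and, for each ordered pair of vertices $(A,B)$, a set of edges $A\to B$ (loops and multiple edges allowed). An evolution of length $m\ge 0$ is a sequence $A_0\leftarrow A_1\leftarrow\cdots\leftarrow A_m$ of vertices together with edges $A_k\to A_{k-1}$ ($1\le k\le m$); $A_0$ is its initial and $A_m$ its terminal vertex. Write $A\le B$ ($A$ is an ancestor of $B$) if there is an evolution with initial vertex $A$ and terminal vertex $B$; $A,B$ are isotypic ($A\sim B$) if $A\le B$ and $B\le A$. A vertex $A$ is primitive if every ancestor of $A$ is isotypic to $A$. A full evolution for $X$ is an evolution with primitive initial vertex and terminal vertex $X$. The height $h(X)$ is the smallest length of a full evolution for $X$ ($\infty$ if none). A vertex $A_k$ ($0\le k<m$) of an evolution $A_0\leftarrow\cdots\leftarrow A_m$ is critical if $h(A_k)<\infty$ and $h(A_{k+1})=h(A_k)+1$. The critical ancestors of a vertex $B$ are the critical vertices of full evolutions terminating at $B$. $B$ is normal if any two critical ancestors of $B$ of equal height are isotypic. An evolution $\alpha=(A_0\leftarrow\cdots\leftarrow A_m)$ embeds in $\beta=(B_0\leftarrow\cdots\leftarrow B_n)$ if $m\le n$ and there are $0\le r_0<\cdots<r_m\le n$ with $A_k\sim B_{r_k}$. A universal evolution for $X$ is a full evolution for $X$ embedding in every full evolution for $X$; $X$ is phylogenetic if one exists. *)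

theory Defs
  imports Main "HOL-Library.Extended_Nat"
begin

text \<open>A quiver: vertices are the elements of type 'v; for each ordered pair (A,B)
  the set Q A B :: 'e set is the set of edges A -> B.
  An evolution A_0 <- A_1 <- ... <- A_m is a pair (as, es) with as = [A_0,...,A_m]
  and es = [e_1,...,e_m], where e_k is an edge A_k -> A_(k-1).\<close>

type_synonym ('v,'e) quiver = "'v \<Rightarrow> 'v \<Rightarrow> 'e set"
type_synonym ('v,'e) evol = "'v list \<times> 'e list"

definition is_evol :: "('v,'e) quiver \<Rightarrow> ('v,'e) evol \<Rightarrow> bool" where
  "is_evol Q ev \<longleftrightarrow> fst ev \<noteq> [] \<and> length (snd ev) + 1 = length (fst ev) \<and>
     (\<forall>k<length (snd ev). snd ev ! k \<in> Q (fst ev ! (k+1)) (fst ev ! k))"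

definition evlen :: "('v,'e) evol \<Rightarrow> nat" where
  "evlen ev = length (snd ev)"

definition init_v :: "('v,'e) evol \<Rightarrow> 'v" where
  "init_v ev = hd (fst ev)"

definition term_v :: "('v,'e) evol \<Rightarrow> 'v" where
  "term_v ev = last (fst ev)"

definition ancestor :: "('v,'e) quiver \<Rightarrow> 'v \<Rightarrow> 'v \<Rightarrow> bool" where
  "ancestor Q A B \<longleftrightarrow> (\<exists>ev. is_evol Q ev \<and> init_v ev = A \<and> term_v ev = B)"

definition isotypic :: "('v,'e) quiver \<Rightarrow> 'v \<Rightarrow> 'v \<Rightarrow> bool" where
  "isotypic Q A B \<longleftrightarrow> ancestor Q A B \<and> ancestor Q B A"

definition primitive :: "('v,'e) quiver \<Rightarrow> 'v \<Rightarrow> bool" where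
  "primitive Q A \<longleftrightarrow> (\<forall>B. ancestor Q B A \<longrightarrow> isotypic Q B A)"

definition full_evol :: "('v,'e) quiver \<Rightarrow> 'v \<Rightarrow> ('v,'e) evol \<Rightarrow> bool" where
  "full_evol Q X ev \<longleftrightarrow> is_evol Q ev \<and> primitive Q (init_v ev) \<and> term_v ev = X"

text \<open>Height: smallest length of a full evolution; \<infinity> (= Inf {}) if there is none.\<close>
definition height :: "('v,'e) quiver \<Rightarrow> 'v \<Rightarrow> enat" where
  "height Q X = (INF ev\<in>{ev. full_evol Q X ev}. enat (evlen ev))"

definition critical :: "('v,'e) quiver \<Rightarrow> ('v,'e) evol \<Rightarrow> nat \<Rightarrow> bool" where
  "critical Q ev k \<longleftrightarrow> k < evlen ev \<and> height Q (fst ev ! k) < \<infinity> \<and>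
     height Q (fst ev ! (k+1)) = height Q (fst ev ! k) + 1"

definition critical_ancestor :: "('v,'e) quiver \<Rightarrow> 'v \<Rightarrow> 'v \<Rightarrow> bool" where
  "critical_ancestor Q B A \<longleftrightarrow>
     (\<exists>ev k. full_evol Q B ev \<and> critical Q ev k \<and> fst ev ! k = A)"

definition normal :: "('v,'e) quiver \<Rightarrow> 'v \<Rightarrow> bool" where
  "normal Q B \<longleftrightarrow> (\<forall>A A'. critical_ancestor Q B A \<and> critical_ancestor Q B A'
      \<and> height Q A = height Q A' \<longrightarrow> isotypic Q A A')"

definition embeds :: "('v,'e) quiver \<Rightarrow> ('v,'e) evol \<Rightarrow> ('v,'e) evol \<Rightarrow> bool" where
  "embeds Q \<alpha> \<beta> \<longleftrightarrow> evlen \<alpha> \<le> evlen \<beta> \<and>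
     (\<exists>r::nat \<Rightarrow> nat. strict_mono_on {0..evlen \<alpha>} r \<and> r (evlen \<alpha>) \<le> evlen \<beta> \<and>
        (\<forall>k\<le>evlen \<alpha>. isotypic Q (fst \<alpha> ! k) (fst \<beta> ! r k)))"

definition universal_evol :: "('v,'e) quiver \<Rightarrow> 'v \<Rightarrow> ('v,'e) evol \<Rightarrow> bool" where
  "universal_evol Q X ev \<longleftrightarrow> full_evol Q X ev \<and> (\<forall>\<beta>. full_evol Q X \<beta> \<longrightarrow> embeds Q ev \<beta>)"

definition phylogenetic :: "('v,'e) quiver \<Rightarrow> 'v \<Rightarrow> bool" where
  "phylogenetic Q X \<longleftrightarrow> (\<exists>ev. universal_evol Q X ev)"

end

theory Submission
  imports Defs
begin

lemma evol_single: "is_evol Q ([A],[])"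
  by (simp add: is_evol_def)

lemma isotypic_refl: "isotypic Q A A"
  unfolding isotypic_def ancestor_def
  by (rule conjI; rule exI[of _ "([A],[])"]) (auto simp: evol_single init_v_def term_v_def)

lemma evol_concat:
  assumes "is_evol Q e1" "is_evol Q e2" "term_v e1 = init_v e2"
  shows "is_evol Q (fst e1 @ tl (fst e2), snd e1 @ snd e2)"
    "init_v (fst e1 @ tl (fst e2), snd e1 @ snd e2) = init_v e1"
    "term_v (fst e1 @ tl (fst e2), snd e1 @ snd e2) = term_v e2"
    "evlen (fst e1 @ tl (fst e2), snd e1 @ snd e2) = evlen e1 + evlen e2"
proof -
  obtain as1 es1 where e1: "e1 = (as1, es1)" by (cases e1)
  obtain as2 es2 where e2: "e2 = (as2, es2)" by (cases e2)
  have n1: "as1 \<noteq> []" "length es1 + 1 = length as1"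
    and c1: "\<And>k. k < length es1 \<Longrightarrow> es1 ! k \<in> Q (as1 ! (k+1)) (as1 ! k)"
    using assms(1) unfolding e1 is_evol_def by auto
  have n2: "as2 \<noteq> []" "length es2 + 1 = length as2"
    and c2: "\<And>k. k < length es2 \<Longrightarrow> es2 ! k \<in> Q (as2 ! (k+1)) (as2 ! k)"
    using assms(2) unfolding e2 is_evol_def by auto
  have lh: "last as1 = hd as2" using assms(3) unfolding e1 e2 term_v_def init_v_def by simp
  have eq: "as1 @ tl as2 = butlast as1 @ as2"
    using n1 n2 lh by (metis append_butlast_last_id append_eq_append_conv2 append_Cons append_Nil list.collapse)
  have lb: "length (butlast as1) = length es1" using n1 by simp
  have "\<forall>k<length (es1 @ es2). (es1 @ es2) ! k \<in> Q ((butlast as1 @ as2) ! (k+1)) ((butlast as1 @ as2) ! k)"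
  proof (intro allI impI)
    fix k assume k: "k < length (es1 @ es2)"
    show "(es1 @ es2) ! k \<in> Q ((butlast as1 @ as2) ! (k+1)) ((butlast as1 @ as2) ! k)"
    proof (cases "k < length es1")
      case True
      have a: "(butlast as1 @ as2) ! k = as1 ! k" using True lb by (simp add: nth_append nth_butlast)
      have b: "(butlast as1 @ as2) ! (k+1) = as1 ! (k+1)"
      proof (cases "k+1 < length es1")
        case True thus ?thesis using lb by (simp add: nth_append nth_butlast)
      next
        case False
        hence "k+1 = length es1" using \<open>k < length es1\<close> by simp
        thus ?thesis using lb n1 n2 lh by (simp add: nth_append last_conv_nth hd_conv_nth)
      qed
      show ?thesis using c1[OF True] a b True by (simp add: nth_append)
    next
      case False
      define i where "i = k - length es1"
      have i: "k = length es1 + i" "i < length es2" using False k i_def by auto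
      show ?thesis using c2[OF i(2)] i lb by (simp add: nth_append)
    qed
  qed
  thus "is_evol Q (fst e1 @ tl (fst e2), snd e1 @ snd e2)"
    unfolding is_evol_def e1 e2 using eq n1 n2 by simp
  show "init_v (fst e1 @ tl (fst e2), snd e1 @ snd e2) = init_v e1"
    unfolding init_v_def e1 using n1 by simp
  show "term_v (fst e1 @ tl (fst e2), snd e1 @ snd e2) = term_v e2"
    unfolding term_v_def e1 e2 using eq n1 n2 by simp
  show "evlen (fst e1 @ tl (fst e2), snd e1 @ snd e2) = evlen e1 + evlen e2"
    unfolding evlen_def e1 e2 by simp
qed

lemma evol_prefix:
  assumes "is_evol Q ev" "j \<le> evlen ev"
  shows "is_evol Q (take (Suc j) (fst ev), take j (snd ev))"
    "init_v (take (Suc j) (fst ev), take j (snd ev)) = init_v ev"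
    "term_v (take (Suc j) (fst ev), take j (snd ev)) = fst ev ! j"
    "evlen (take (Suc j) (fst ev), take j (snd ev)) = j"
proof -
  have l: "last (take (Suc j) xs) = xs ! j" if "j < length xs" for xs :: "'a list"
    using that by (simp add: take_Suc_conv_app_nth)
  show "is_evol Q (take (Suc j) (fst ev), take j (snd ev))"
    using assms unfolding is_evol_def evlen_def by auto
  show "init_v (take (Suc j) (fst ev), take j (snd ev)) = init_v ev"
    using assms unfolding is_evol_def init_v_def evlen_def by (auto simp: hd_take)
  show "term_v (take (Suc j) (fst ev), take j (snd ev)) = fst ev ! j"
    using assms l[of "fst ev"] unfolding is_evol_def term_v_def evlen_def by auto
  show "evlen (take (Suc j) (fst ev), take j (snd ev)) = j"
    using assms unfolding is_evol_def evlen_def by auto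
qed

lemma evol_suffix:
  assumes "is_evol Q ev" "j \<le> evlen ev"
  shows "is_evol Q (drop j (fst ev), drop j (snd ev))"
    "init_v (drop j (fst ev), drop j (snd ev)) = fst ev ! j"
    "term_v (drop j (fst ev), drop j (snd ev)) = term_v ev"
    "evlen (drop j (fst ev), drop j (snd ev)) = evlen ev - j"
  using assms unfolding is_evol_def init_v_def term_v_def evlen_def
  by (auto simp: hd_drop_conv_nth add.commute add.left_commute)

lemma evol_edge:
  assumes "is_evol Q ev" "j < evlen ev"
  shows "is_evol Q ([fst ev ! j, fst ev ! Suc j], [snd ev ! j])"
  using assms unfolding is_evol_def evlen_def by auto

lemma height_le: "full_evol Q X ev \<Longrightarrow> height Q X \<le> enat (evlen ev)"
  unfolding height_def by (rule INF_lower) simp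

lemma height_attained:
  assumes "height Q X \<noteq> \<infinity>"
  shows "\<exists>ev. full_evol Q X ev \<and> height Q X = enat (evlen ev)"
proof -
  have "{ev. full_evol Q X ev} \<noteq> {}"
  proof
    assume e: "{ev. full_evol Q X ev} = {}"
    have "height Q X = \<infinity>" unfolding height_def e by (simp add: top_enat_def)
    thus False using assms by simp
  qed
  then obtain ev0 where "full_evol Q X ev0" by auto
  then obtain ev where ev: "full_evol Q X ev" "\<And>y. full_evol Q X y \<Longrightarrow> evlen ev \<le> evlen y"
    using ex_has_least_nat[of "full_evol Q X" ev0 evlen] by auto
  have "height Q X = enat (evlen ev)"
  proof (rule antisym)
    show "height Q X \<le> enat (evlen ev)" by (rule height_le[OF ev(1)])
    show "enat (evlen ev) \<le> height Q X"
      unfolding height_def by (rule INF_greatest) (use ev(2) in auto)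
  qed
  thus ?thesis using ev(1) by blast
qed

lemma height_concat:
  assumes "is_evol Q e2" "init_v e2 = A" "term_v e2 = B"
  shows "height Q B \<le> height Q A + enat (evlen e2)"
proof (cases "height Q A = \<infinity>")
  case True
  hence "height Q A + enat (evlen e2) = \<infinity>" by simp
  thus ?thesis by (simp only: top_enat_def[symmetric] top_greatest)
next
  case False
  obtain e1 where e1: "full_evol Q A e1" "height Q A = enat (evlen e1)"
    using height_attained[OF False] by (elim exE conjE)
  have f: "full_evol Q B (fst e1 @ tl (fst e2), snd e1 @ snd e2)"
  proof -
    have i: "is_evol Q e1" "primitive Q (init_v e1)" "term_v e1 = A"
      using e1(1) unfolding full_evol_def by auto
    show ?thesis unfolding full_evol_def
      using evol_concat[OF i(1) assms(1)] i assms(2,3) by simp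
  qed
  have "evlen (fst e1 @ tl (fst e2), snd e1 @ snd e2) = evlen e1 + evlen e2"
    by (simp add: evlen_def)
  hence "height Q B \<le> enat (evlen e1 + evlen e2)"
    using height_le[OF f] by simp
  thus ?thesis using e1(2) by simp
qed

lemma height_prefix:
  assumes "full_evol Q X ev" "j \<le> evlen ev"
  shows "height Q (fst ev ! j) \<le> enat j"
proof -
  have "full_evol Q (fst ev ! j) (take (Suc j) (fst ev), take j (snd ev))"
    using assms evol_prefix[of Q ev j] unfolding full_evol_def by auto
  from height_le[OF this] show ?thesis using evol_prefix(4)[OF _ assms(2)] assms
    unfolding full_evol_def by auto
qed

lemma height_step:
  assumes "is_evol Q ev" "j < evlen ev"
  shows "height Q (fst ev ! Suc j) \<le> height Q (fst ev ! j) + 1"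
  using height_concat[OF evol_edge[OF assms]] by (simp add: init_v_def term_v_def evlen_def one_enat_def)

lemma init_nth0: "is_evol Q ev \<Longrightarrow> init_v ev = fst ev ! 0"
  unfolding is_evol_def init_v_def by (simp add: hd_conv_nth)

lemma term_nth: "is_evol Q ev \<Longrightarrow> term_v ev = fst ev ! evlen ev"
proof -
  assume "is_evol Q ev"
  hence "fst ev \<noteq> []" "length (fst ev) - 1 = evlen ev" unfolding is_evol_def evlen_def by auto
  thus ?thesis unfolding term_v_def by (simp add: last_conv_nth)
qed
lemma primitive_height: "primitive Q A \<Longrightarrow> height Q A = 0"
proof -
  assume "primitive Q A"
  hence "full_evol Q A ([A],[])" unfolding full_evol_def
    by (simp add: evol_single init_v_def term_v_def)
  from height_le[OF this] show ?thesis by (simp add: evlen_def zero_enat_def[symmetric])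
qed

lemma shortest_heights:
  assumes "full_evol Q X \<alpha>" "height Q X = enat (evlen \<alpha>)" "k \<le> evlen \<alpha>"
  shows "height Q (fst \<alpha> ! k) = enat k"
proof (rule antisym)
  show "height Q (fst \<alpha> ! k) \<le> enat k" by (rule height_prefix[OF assms(1,3)])
  have ev: "is_evol Q \<alpha>" "term_v \<alpha> = X" using assms(1) unfolding full_evol_def by auto
  have "height Q X \<le> height Q (fst \<alpha> ! k) + enat (evlen \<alpha> - k)"
    using height_concat[OF evol_suffix(1)[OF ev(1) assms(3)] evol_suffix(2)[OF ev(1) assms(3)]]
      evol_suffix(3,4)[OF ev(1) assms(3)] ev(2) by simp
  hence "enat (evlen \<alpha>) \<le> height Q (fst \<alpha> ! k) + enat (evlen \<alpha> - k)" using assms(2) by simp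
  thus "enat k \<le> height Q (fst \<alpha> ! k)" using assms(3)
    by (cases "height Q (fst \<alpha> ! k)") auto
qed

theorem theorem5p1:
  fixes Q :: "('v,'e) quiver" and X :: 'v
  assumes "normal Q X" and "height Q X < \<infinity>"
  shows "phylogenetic Q X"
proof -
  obtain \<alpha> where \<alpha>: "full_evol Q X \<alpha>" "height Q X = enat (evlen \<alpha>)"
    using height_attained assms(2) by (metis less_irrefl)
  define n where "n = evlen \<alpha>"
  have \<alpha>ev: "is_evol Q \<alpha>" using \<alpha> unfolding full_evol_def by auto
  have hA: "\<And>k. k \<le> n \<Longrightarrow> height Q (fst \<alpha> ! k) = enat k"
    using shortest_heights[OF \<alpha>] n_def by auto
  have critA: "\<And>k. k < n \<Longrightarrow> critical_ancestor Q X (fst \<alpha> ! k)"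
  proof -
    fix k assume k: "k < n"
    have "critical Q \<alpha> k" unfolding critical_def using k hA[of k] hA[of "k+1"] n_def
      by (simp add: eSuc_enat[symmetric] eSuc_plus_1)
    thus "critical_ancestor Q X (fst \<alpha> ! k)" unfolding critical_ancestor_def using \<alpha>(1) by blast
  qed
  have "\<forall>\<beta>. full_evol Q X \<beta> \<longrightarrow> embeds Q \<alpha> \<beta>"
  proof (intro allI impI)
    fix \<beta> assume \<beta>: "full_evol Q X \<beta>"
    define m where "m = evlen \<beta>"
    have \<beta>ev: "is_evol Q \<beta>" "primitive Q (init_v \<beta>)" "term_v \<beta> = X"
      using \<beta> unfolding full_evol_def by auto
    define g where "g j = the_enat (height Q (fst \<beta> ! j))" for j
    have hB: "\<And>j. j \<le> m \<Longrightarrow> height Q (fst \<beta> ! j) = enat (g j)"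
    proof -
      fix j assume "j \<le> m"
      hence "height Q (fst \<beta> ! j) \<le> enat j" using height_prefix[OF \<beta>] m_def by auto
      thus "height Q (fst \<beta> ! j) = enat (g j)" unfolding g_def
        by (cases "height Q (fst \<beta> ! j)") auto
    qed
    have g0: "g 0 = 0" using hB[of 0] primitive_height[OF \<beta>ev(2)] init_nth0[OF \<beta>ev(1)]
      by (simp add: zero_enat_def)
    have gm: "g m = n" using hB[of m] term_nth[OF \<beta>ev(1)] \<beta>ev(3) \<alpha>(2) m_def n_def by simp
    have gstep: "\<And>j. j < m \<Longrightarrow> g (Suc j) \<le> g j + 1"
    proof -
      fix j assume j: "j < m"
      have "height Q (fst \<beta> ! Suc j) \<le> height Q (fst \<beta> ! j) + 1"
        using height_step[OF \<beta>ev(1)] j m_def by auto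
      thus "g (Suc j) \<le> g j + 1" using hB[of j] hB[of "Suc j"] j by (simp add: one_enat_def)
    qed
    have nm: "n \<le> m" using height_le[OF \<beta>] \<alpha>(2) m_def n_def by simp
    define P where "P k j \<longleftrightarrow> j \<le> m \<and> g j \<le> k" for k j
    define r where "r k = (if k < n then Greatest (P k) else m)" for k
    have rP: "P k (r k) \<and> (\<forall>j. P k j \<longrightarrow> j \<le> r k)" if "k < n" for k
    proof -
      have p0: "P k 0" using g0 unfolding P_def by simp
      have bnd: "\<And>y. P k y \<Longrightarrow> y \<le> m" unfolding P_def by simp
      have "r k = Greatest (P k)" using that unfolding r_def by simp
      thus ?thesis using GreatestI_nat[of "P k" 0 m, OF p0 bnd] Greatest_le_nat[of "P k" _ m, OF _ bnd] by auto
    qed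
    have rprop: "r k < m \<and> g (r k) = k \<and> g (Suc (r k)) = Suc k" if k: "k < n" for k
    proof -
      have a: "r k \<le> m" "g (r k) \<le> k" using rP[OF k] unfolding P_def by auto
      have b: "r k \<noteq> m" using a gm k by auto
      hence c: "r k < m" using a by simp
      have "\<not> P k (Suc (r k))" using rP[OF k] by fastforce
      hence d: "g (Suc (r k)) > k" using c unfolding P_def by auto
      have "g (Suc (r k)) \<le> g (r k) + 1" using gstep c by auto
      thus ?thesis using a c d by auto
    qed
    have crit: "critical_ancestor Q X (fst \<beta> ! r k)" if k: "k < n" for k
    proof -
      have "critical Q \<beta> (r k)" unfolding critical_def using rprop[OF k] hB[of "r k"] hB[of "Suc (r k)"] m_def
        by (simp add: one_enat_def)
      thus ?thesis unfolding critical_ancestor_def using \<beta> by blast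
    qed
    have iso: "isotypic Q (fst \<alpha> ! k) (fst \<beta> ! r k)" if k: "k \<le> n" for k
    proof (cases "k < n")
      case True
      have "height Q (fst \<alpha> ! k) = height Q (fst \<beta> ! r k)"
        using hA[of k] True hB[of "r k"] rprop[OF True] by simp
      thus ?thesis using assms(1) critA[OF True] crit[OF True] unfolding normal_def by blast
    next
      case False
      hence "k = n" using k by simp
      hence "fst \<alpha> ! k = X" "fst \<beta> ! r k = X"
        using term_nth[OF \<alpha>ev] \<alpha>(1) term_nth[OF \<beta>ev(1)] \<beta>ev(3) n_def m_def r_def
        unfolding full_evol_def by auto
      thus ?thesis by (simp add: isotypic_refl)
    qed
    have mono: "strict_mono_on {0..n} r"
    proof (rule strict_mono_onI)
      fix k k' assume kk: "k \<in> {0..n}" "k' \<in> {0..n}" "k < k'"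
      hence k: "k < n" by simp
      show "r k < r k'"
      proof (cases "k' < n")
        case True
        have "P k' (r k)" using rP[OF k] kk(3) unfolding P_def by auto
        hence "r k \<le> r k'" using rP[OF True] by blast
        moreover have "r k \<noteq> r k'" using rprop[OF k] rprop[OF True] kk(3) by auto
        ultimately show ?thesis by simp
      next
        case False thus ?thesis using rprop[OF k] r_def by simp
      qed
    qed
    have rn: "r n = m" unfolding r_def by simp
    show "embeds Q \<alpha> \<beta>" unfolding embeds_def
      using nm mono rn iso n_def m_def by (metis order_refl)
  qed
  hence "universal_evol Q X \<alpha>" unfolding universal_evol_def using \<alpha>(1) by blast
  thus ?thesis unfolding phylogenetic_def by blast
qed

end
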